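(* Let $\mathscr{P}_1$ and $\mathscr{P}_2$ be two positions of impartial combinatorial games played under the normal play convention, and consider their sum $\mathscr{P}_1+\mathscr{P}_2$ (independent components, a move consists of a move in exactly one component). Suppose a solution tree $S$ for $\mathscr{P}_1+\mathscr{P}_2$ has been computed, i.e. the outcome of every node of $S$ is known. Then, using only the nodes of $S$ and their outcomes, without computing the outcome of any other node, one can determine the nimber of one of the two components $\mathscr{P}_1$, $\mathscr{P}_2$, and whether the nimber of the other component is equal to it or different from it.
   Context: An impartial combinatorial game: two players move alternately with perfect information and no chance, and the same moves are available to both players from every position; under the normal play convention the player who cannot move loses. An option of a position $\mathscr{P}$ is a position reachable from $\mathscr{P}$ in one move. The outcome of a position is W (winning) if the player to move has a winning strategy and L (losing) otherwise: terminal positions are L, a position is W iff it has at least one option that is L, and L iff all its options are W. The sum $\mathscr{P}_1+\mathscr{P}_2$ is the position whose options are $\mathscr{P}_1'+\mathscr{P}_2$ for $\mathscr{P}_1'$ an option of $\mathscr{P}_1$ and $\mathscr{P}_1+\mathscr{P}_2'$ for $\mathscr{P}_2'$ an option of $\mathscr{P}_2$. A solution tree for a position $\mathscr{Q}$ is a subset $S$ of the nodes of the game tree of $\mathscr{Q}$ (the positions reachable from $\mathscr{Q}$, with edges from a position to its options), containing $\mathscr{Q}$, together with the outcomes of its nodes, such that every losing node of $S$ has all its options in $S$ and every winning node of $S$ has at least one losing option in $S$. The nimber of a position is defined recursively as the Mex (least non-negative integer not in the set) of the nimbers of its options; terminal positions have nimber $0$. By the Sprague–Grundy theory, $\mathscr{P}_1+\mathscr{P}_2$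 is losing iff the nimbers of $\mathscr{P}_1$ and $\mathscr{P}_2$ are equal. *)

theory Defs
  imports Main
begin

text \<open>An impartial game is given by an option function opt: opt x is the set of
  positions reachable from x in one move.\<close>

definition mex :: "nat set \<Rightarrow> nat" where
  "mex A = (LEAST n. n \<notin> A)"

inductive win :: "('a \<Rightarrow> 'a set) \<Rightarrow> 'a \<Rightarrow> bool"
  and lose :: "('a \<Rightarrow> 'a set) \<Rightarrow> 'a \<Rightarrow> bool"
  for opt :: "'a \<Rightarrow> 'a set" where
  lose_intro: "(\<forall>y\<in>opt x. win opt y) \<Longrightarrow> lose opt x"
| win_intro: "y \<in> opt x \<Longrightarrow> lose opt y \<Longrightarrow> win opt x"

inductive is_nimber :: "('a \<Rightarrow> 'a set) \<Rightarrow> 'a \<Rightarrow> nat \<Rightarrow> bool"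
  for opt :: "'a \<Rightarrow> 'a set" where
  "(\<forall>y\<in>opt x. is_nimber opt y (g y)) \<Longrightarrow> is_nimber opt x (mex (g ` opt x))"

definition nimber :: "('a \<Rightarrow> 'a set) \<Rightarrow> 'a \<Rightarrow> nat" where
  "nimber opt x = (THE n. is_nimber opt x n)"

text \<open>A position p is a (finite) game position: no infinite play starts at p and
  every position reachable from p has finitely many options.\<close>
definition game_pos :: "('a \<Rightarrow> 'a set) \<Rightarrow> 'a \<Rightarrow> bool" where
  "game_pos opt p \<longleftrightarrow> p \<in> Wellfounded.acc {(y, x). y \<in> opt x}
     \<and> (\<forall>q. (p, q) \<in> {(x, y). y \<in> opt x}\<^sup>* \<longrightarrow> finite (opt q))"

definition sum_opt :: "('a \<Rightarrow> 'a set) \<Rightarrow> ('b \<Rightarrow> 'b set) \<Rightarrow> 'a \<times> 'b \<Rightarrow> ('a \<times> 'b) set" where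
  "sum_opt opt1 opt2 z = {(x', snd z) | x'. x' \<in> opt1 (fst z)} \<union> {(fst z, y') | y'. y' \<in> opt2 (snd z)}"

text \<open>Solution tree S for position Q (w.r.t. option function opt), with outcome
  labelling out (True = W, False = L) giving the true outcomes of the nodes of S.\<close>
definition solution_tree :: "('a \<Rightarrow> 'a set) \<Rightarrow> 'a \<Rightarrow> 'a set \<Rightarrow> ('a \<Rightarrow> bool) \<Rightarrow> bool" where
  "solution_tree opt Q S out \<longleftrightarrow>
     Q \<in> S
   \<and> S \<subseteq> {z. (Q, z) \<in> {(a, b). b \<in> opt a}\<^sup>*}
   \<and> (\<forall>z\<in>S. (out z \<longrightarrow> win opt z) \<and> (\<not> out z \<longrightarrow> lose opt z))
   \<and> (\<forall>z\<in>S. \<not> out z \<longrightarrow> opt z \<subseteq> S)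
   \<and> (\<forall>z\<in>S. out z \<longrightarrow> (\<exists>z'\<in>opt z \<inter> S. \<not> out z'))"

end

theory Submission
  imports Defs
begin

lemma mem_sum_opt:
  "(a, b) \<in> sum_opt o1 o2 (x, y) \<longleftrightarrow> (a \<in> o1 x \<and> b = y) \<or> (a = x \<and> b \<in> o2 y)"
  by (auto simp: sum_opt_def)

lemma gp_opt:
  assumes "game_pos opt x" "x' \<in> opt x" shows "game_pos opt x'"
proof -
  have "x' \<in> Wellfounded.acc {(y, x). y \<in> opt x}"
    using assms by (auto simp: game_pos_def intro: acc_downward)
  moreover have "\<forall>q. (x', q) \<in> {(x, y). y \<in> opt x}\<^sup>* \<longrightarrow> finite (opt q)"
  proof (intro allI impI)
    fix q assume "(x', q) \<in> {(x, y). y \<in> opt x}\<^sup>*"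
    then have "(x, q) \<in> {(x, y). y \<in> opt x}\<^sup>*"
      using assms(2) by (auto intro: converse_rtrancl_into_rtrancl)
    then show "finite (opt q)" using assms(1) by (auto simp: game_pos_def)
  qed
  ultimately show ?thesis by (simp add: game_pos_def)
qed

lemma gp_finite: "game_pos opt x \<Longrightarrow> finite (opt x)"
  by (auto simp: game_pos_def)

lemma gp_induct[consumes 1, case_names step]:
  assumes "game_pos opt x"
    and "\<And>x. game_pos opt x \<Longrightarrow> (\<And>x'. x' \<in> opt x \<Longrightarrow> P x') \<Longrightarrow> P x"
  shows "P x"
proof -
  have "x \<in> Wellfounded.acc {(y, x). y \<in> opt x}" using assms(1) unfolding game_pos_def by (rule conjunct1)
  then have "game_pos opt x \<longrightarrow> P x"
  proof (induction rule: acc_induct_rule)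
    case (1 x)
    show ?case
    proof
      assume g: "game_pos opt x"
      show "P x"
      proof (rule assms(2)[OF g])
        fix x' assume x': "x' \<in> opt x"
        have gx: "game_pos opt x'" by (rule gp_opt[OF g x'])
        have "(x', x) \<in> {(y, x). y \<in> opt x}" using x' by simp
        then have "game_pos opt x' \<longrightarrow> P x'" by (rule 1)
        then show "P x'" using gx by (rule mp)
      qed
    qed
  qed
  then show ?thesis using assms(1) by (rule mp)
qed

lemma pair_induct[consumes 2, case_names step]:
  assumes "game_pos opt1 x" "game_pos opt2 y"
    and "\<And>x y. game_pos opt1 x \<Longrightarrow> game_pos opt2 y \<Longrightarrow> (\<And>x'. x' \<in> opt1 x \<Longrightarrow> P x' y)
      \<Longrightarrow> (\<And>y'. y' \<in> opt2 y \<Longrightarrow> P x y') \<Longrightarrow> P x y"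
  shows "P x y"
proof -
  have "\<forall>y. game_pos opt2 y \<longrightarrow> P x y"
    using assms(1)
  proof (induction rule: gp_induct)
    case (step x)
    note outer = step
    show ?case
    proof (intro allI impI)
      fix y assume "game_pos opt2 y"
      then show "P x y"
      proof (induction rule: gp_induct)
        case (step y)
        show ?case
        proof (rule assms(3)[OF outer(1) step(1)])
          fix x' assume "x' \<in> opt1 x"
          then have "\<forall>y. game_pos opt2 y \<longrightarrow> P x' y" by (rule outer(2))
          then show "P x' y" using step(1) by blast
        next
          fix y' assume "y' \<in> opt2 y" then show "P x y'" by (rule step(2))
        qed
      qed
    qed
  qed
  then show ?thesis using assms(2) by blast
qed

lemma gp_irrefl: "game_pos opt x \<Longrightarrow> x \<notin> opt x"
proof (induction rule: gp_induct)
  case (step x)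
  show ?case
  proof
    assume "x \<in> opt x"
    then have "x \<notin> opt x" by (rule step(2))
    then show False using \<open>x \<in> opt x\<close> by simp
  qed
qed

lemma nimber_unique:
  "x \<in> Wellfounded.acc {(y, x). y \<in> opt x} \<Longrightarrow> is_nimber opt x n \<Longrightarrow> is_nimber opt x m \<Longrightarrow> n = m"
proof (induction x arbitrary: n m rule: acc_induct_rule)
  case (1 x)
  from \<open>is_nimber opt x n\<close> obtain g where g: "\<forall>y\<in>opt x. is_nimber opt y (g y)" "n = mex (g ` opt x)"
    by (cases rule: is_nimber.cases) auto
  from \<open>is_nimber opt x m\<close> obtain h where h: "\<forall>y\<in>opt x. is_nimber opt y (h y)" "m = mex (h ` opt x)"
    by (cases rule: is_nimber.cases) auto
  have "\<forall>y\<in>opt x. g y = h y" using 1 g h by blast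
  then have "g ` opt x = h ` opt x" by (auto intro: image_cong)
  then show ?case using g h by simp
qed

lemma nimber_eq:
  assumes "game_pos opt x"
  shows "is_nimber opt x (nimber opt x) \<and> nimber opt x = mex (nimber opt ` opt x)"
  using assms
proof (induction rule: gp_induct)
  case (step x)
  have i: "is_nimber opt x (mex (nimber opt ` opt x))"
  proof -
    have "\<forall>y\<in>opt x. is_nimber opt y (nimber opt y)" using step by blast
    then show ?thesis by (rule is_nimber.intros)
  qed
  have acc: "x \<in> Wellfounded.acc {(y, x). y \<in> opt x}" using step by (simp add: game_pos_def)
  have "nimber opt x = mex (nimber opt ` opt x)"
    unfolding nimber_def[of opt x] by (rule the_equality[where P="is_nimber opt x", OF i]) (use nimber_unique[OF acc] i in blast)
  then show ?case using i by simp
qed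

lemma mex_notin: "finite A \<Longrightarrow> mex A \<notin> A"
  unfolding mex_def
  by (rule LeastI_ex) (meson ex_new_if_finite infinite_UNIV_nat)

lemma mex_less: "k < mex A \<Longrightarrow> k \<in> A"
  unfolding mex_def using not_less_Least by blast

lemma sg:
  assumes "game_pos opt1 x" "game_pos opt2 y"
  shows "(win (sum_opt opt1 opt2) (x, y) \<longrightarrow> nimber opt1 x \<noteq> nimber opt2 y)
       \<and> (lose (sum_opt opt1 opt2) (x, y) \<longrightarrow> nimber opt1 x = nimber opt2 y)"
  using assms
proof (induction rule: pair_induct)
  case (step x y)
  let ?so = "sum_opt opt1 opt2"
  have nx: "nimber opt1 x = mex (nimber opt1 ` opt1 x)" using nimber_eq[of opt1 x] step(1) by simp
  have ny: "nimber opt2 y = mex (nimber opt2 ` opt2 y)" using nimber_eq[of opt2 y] step(2) by simp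
  have fx: "finite (nimber opt1 ` opt1 x)" using gp_finite[OF step(1)] by simp
  have fy: "finite (nimber opt2 ` opt2 y)" using gp_finite[OF step(2)] by simp
  have nx': "nimber opt1 x \<notin> nimber opt1 ` opt1 x" using mex_notin[OF fx] nx by simp
  have ny': "nimber opt2 y \<notin> nimber opt2 ` opt2 y" using mex_notin[OF fy] ny by simp
  have A: "\<not> win ?so (x, y)" if eq: "nimber opt1 x = nimber opt2 y"
  proof
    assume "win ?so (x, y)"
    then obtain z where z: "z \<in> ?so (x, y)" "lose ?so z"
      by (cases rule: win.cases) auto
    obtain a b where ab: "z = (a, b)" by (cases z)
    have zz: "(a \<in> opt1 x \<and> b = y) \<or> (a = x \<and> b \<in> opt2 y)" using z(1) ab by (simp add: mem_sum_opt)
    show False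
    proof (cases "a \<in> opt1 x \<and> b = y")
      case True
      have "lose ?so (a, y)" using z(2) ab True by simp
      then have "nimber opt1 a = nimber opt2 y" using step(3)[of a] True by simp
      then have "nimber opt1 x \<in> nimber opt1 ` opt1 x" using True eq by (metis image_eqI)
      then show False using nx' by simp
    next
      case False
      then have F: "a = x \<and> b \<in> opt2 y" using zz by blast
      have "lose ?so (x, b)" using z(2) ab F by simp
      then have "nimber opt1 x = nimber opt2 b" using step(4)[of b] F by simp
      then have "nimber opt2 y \<in> nimber opt2 ` opt2 y" using F eq by (metis image_eqI)
      then show False using ny' by simp
    qed
  qed
  have B: "\<not> lose ?so (x, y)" if neq: "nimber opt1 x \<noteq> nimber opt2 y"
  proof
    assume L: "lose ?so (x, y)"
    then have allw: "\<forall>z\<in>?so (x, y). win ?so z" by (cases rule: lose.cases) auto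
    show False
    proof (cases "nimber opt2 y < nimber opt1 x")
      case True
      then have "nimber opt2 y \<in> nimber opt1 ` opt1 x" using nx mex_less by simp
      then obtain x' where x': "x' \<in> opt1 x" "nimber opt1 x' = nimber opt2 y" by (metis imageE)
      then have "(x', y) \<in> ?so (x, y)" by (simp add: mem_sum_opt)
      then have "win ?so (x', y)" using allw by blast
      then show False using step(3)[OF x'(1)] x'(2) by simp
    next
      case False
      then have "nimber opt1 x < nimber opt2 y" using neq by simp
      then have "nimber opt1 x \<in> nimber opt2 ` opt2 y" using ny mex_less by simp
      then obtain y' where y': "y' \<in> opt2 y" "nimber opt2 y' = nimber opt1 x" by (metis imageE)
      then have "(x, y') \<in> ?so (x, y)" by (simp add: mem_sum_opt)
      then have "win ?so (x, y')" using allw by blast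
      then show False using step(4)[OF y'(1)] y'(2) by simp
    qed
  qed
  show ?case using A B by blast
qed

inductive ans :: "('a \<times> 'b \<Rightarrow> bool) \<Rightarrow> ('a \<times> 'b \<Rightarrow> ('a \<times> 'b) set) \<Rightarrow> 'a \<times> 'b \<Rightarrow> bool \<times> nat \<times> bool \<Rightarrow> bool"
  for ou :: "'a \<times> 'b \<Rightarrow> bool" and ed :: "'a \<times> 'b \<Rightarrow> ('a \<times> 'b) set" where
  L1: "\<not> ou (x, y) \<Longrightarrow> (x', y) \<in> ed (x, y) \<Longrightarrow> ans ou ed (x', y) (False, v, s)
        \<Longrightarrow> ans ou ed (x, y) (False, v, True)"
| L3: "\<not> ou (x, y) \<Longrightarrow> (\<forall>x'. (x', y) \<in> ed (x, y) \<longrightarrow> (\<exists>s. ans ou ed (x', y) (True, f x', s)))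
        \<Longrightarrow> ans ou ed (x, y) (True, mex (f ` {x'. (x', y) \<in> ed (x, y)}), True)"
| W1: "ou (x, y) \<Longrightarrow> (x', y) \<in> ed (x, y) \<Longrightarrow> \<not> ou (x', y) \<Longrightarrow> ans ou ed (x', y) a
        \<Longrightarrow> ans ou ed (x, y) (False, fst (snd a), False)"
| W2: "ou (x, y) \<Longrightarrow> (x, y') \<in> ed (x, y) \<Longrightarrow> \<not> ou (x, y') \<Longrightarrow> ans ou ed (x, y') a
        \<Longrightarrow> ans ou ed (x, y) (True, fst (snd a), False)"

definition correct :: "('a \<Rightarrow> 'a set) \<Rightarrow> ('b \<Rightarrow> 'b set) \<Rightarrow> 'a \<times> 'b \<Rightarrow> bool \<times> nat \<times> bool \<Rightarrow> bool" where
  "correct opt1 opt2 z a = (case a of (first, n, same) \<Rightarrow>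
     (if first then nimber opt1 (fst z) = n \<and> (nimber opt2 (snd z) = n \<longleftrightarrow> same)
      else nimber opt2 (snd z) = n \<and> (nimber opt1 (fst z) = n \<longleftrightarrow> same)))"

locale setting =
  fixes opt1 :: "'a \<Rightarrow> 'a set" and opt2 :: "'b \<Rightarrow> 'b set" and P1 P2 S out
  assumes g1: "game_pos opt1 P1" and g2: "game_pos opt2 P2"
    and st: "solution_tree (sum_opt opt1 opt2) (P1, P2) S out"
begin

abbreviation "so \<equiv> sum_opt opt1 opt2"
abbreviation "ou \<equiv> (\<lambda>z. z \<in> S \<and> out z)"
abbreviation "ed \<equiv> (\<lambda>z. if z \<in> S then so z \<inter> S else {})"

lemma reach_gp:
  assumes "((P1, P2), z) \<in> {(a, b). b \<in> so a}\<^sup>*"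
  shows "game_pos opt1 (fst z) \<and> game_pos opt2 (snd z)"
  using assms
proof (induction rule: rtrancl_induct)
  case base
  then show ?case using g1 g2 by simp
next
  case (step z w)
  obtain a b where ab: "z = (a, b)" by fastforce
  obtain c d where cd: "w = (c, d)" by fastforce
  have "(c, d) \<in> so (a, b)" using step(2) ab cd by simp
  then have "(c \<in> opt1 a \<and> d = b) \<or> (c = a \<and> d \<in> opt2 b)"
    by (simp add: mem_sum_opt)
  then show ?case
  proof
    assume h: "c \<in> opt1 a \<and> d = b"
    have "game_pos opt1 a" using step(3) ab by simp
    then have "game_pos opt1 c" using h gp_opt by metis
    then show ?thesis using step(3) ab cd h by simp
  next
    assume h: "c = a \<and> d \<in> opt2 b"
    have "game_pos opt2 b" using step(3) ab by simp
    then have "game_pos opt2 d" using h gp_opt by metis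
    then show ?thesis using step(3) ab cd h by simp
  qed
qed

lemma S_gp: "z \<in> S \<Longrightarrow> game_pos opt1 (fst z) \<and> game_pos opt2 (snd z)"
proof -
  assume "z \<in> S"
  then have "((P1, P2), z) \<in> {(a, b). b \<in> so a}\<^sup>*" using st unfolding solution_tree_def by blast
  then show ?thesis by (rule reach_gp)
qed

lemma S_out: "z \<in> S \<Longrightarrow> (out z \<longrightarrow> win so z) \<and> (\<not> out z \<longrightarrow> lose so z)"
  using st unfolding solution_tree_def by blast

lemma S_lose_sub: "z \<in> S \<Longrightarrow> \<not> out z \<Longrightarrow> so z \<subseteq> S"
  using st unfolding solution_tree_def by blast

lemma S_win_ex: "z \<in> S \<Longrightarrow> out z \<Longrightarrow> \<exists>z'\<in>so z \<inter> S. \<not> out z'"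
  using st unfolding solution_tree_def by blast

lemma S_nim: "(x, y) \<in> S \<Longrightarrow> (out (x, y) \<longrightarrow> nimber opt1 x \<noteq> nimber opt2 y)
   \<and> (\<not> out (x, y) \<longrightarrow> nimber opt1 x = nimber opt2 y)"
  using S_gp[of "(x, y)"] S_out[of "(x, y)"] sg[of opt1 x opt2 y] by auto

lemma first_opts:
  assumes "(x, y) \<in> S" "\<not> out (x, y)"
  shows "{x'. (x', y) \<in> ed (x, y)} = opt1 x"
proof
  show "{x'. (x', y) \<in> ed (x, y)} \<subseteq> opt1 x"
  proof
    fix x' assume "x' \<in> {x'. (x', y) \<in> ed (x, y)}"
    then have "(x', y) \<in> so (x, y)" using assms by auto
    then have "x' \<in> opt1 x \<or> (x' = x \<and> y \<in> opt2 y)" using mem_sum_opt by metis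
    moreover have "y \<notin> opt2 y" using gp_irrefl[of opt2 y] S_gp[OF assms(1)] by simp
    ultimately show "x' \<in> opt1 x" by blast
  qed
next
  show "opt1 x \<subseteq> {x'. (x', y) \<in> ed (x, y)}"
  proof
    fix x' assume x': "x' \<in> opt1 x"
    then have "(x', y) \<in> so (x, y)" by (simp add: mem_sum_opt)
    then show "x' \<in> {x'. (x', y) \<in> ed (x, y)}" using assms S_lose_sub by auto
  qed
qed

lemma ans_correct:
  "ans ou ed z a \<Longrightarrow> z \<in> S \<Longrightarrow> correct opt1 opt2 z a"
proof (induction rule: ans.induct)
  case (L1 x y x' v s)
  have "(x', y) \<in> S" using L1 by (auto split: if_splits)
  then have "nimber opt2 y = v" using L1(4) by (simp add: correct_def)
  moreover have "nimber opt1 x = nimber opt2 y" using S_nim[OF L1(5)] L1(1) L1(5) by auto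
  ultimately show ?case by (simp add: correct_def)
next
  case (L3 x y f)
  have nout: "\<not> out (x, y)" using L3 by auto
  have eq: "{x'. (x', y) \<in> ed (x, y)} = opt1 x" using first_opts[OF L3(3) nout] .
  have "\<forall>x'\<in>opt1 x. f x' = nimber opt1 x'"
  proof
    fix x' assume x': "x' \<in> opt1 x"
    then have e: "(x', y) \<in> ed (x, y)" using eq by blast
    then have "(x', y) \<in> S" using L3(3) by auto
    moreover obtain s where "ans ou ed (x', y) (True, f x', s) \<and> (x' ,y) \<in> S \<longrightarrow> correct opt1 opt2 (x', y) (True, f x', s)"
      using L3(2) e by blast
    moreover have "\<exists>s. ans ou ed (x', y) (True, f x', s) \<and> ((x', y) \<in> S \<longrightarrow> correct opt1 opt2 (x', y) (True, f x', s))"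
      using L3(2) e by blast
    ultimately show "f x' = nimber opt1 x'" by (auto simp: correct_def)
  qed
  then have "f ` opt1 x = nimber opt1 ` opt1 x" by (auto intro: image_cong)
  moreover have "nimber opt1 x = mex (nimber opt1 ` opt1 x)" using nimber_eq[of opt1 x] S_gp[OF L3(3)] by simp
  moreover have "nimber opt1 x = nimber opt2 y" using S_nim[OF L3(3)] nout by auto
  ultimately show ?case using eq by (simp add: correct_def)
next
  case (W1 x y x' a)
  have inS: "(x', y) \<in> S" using W1 by (auto split: if_splits)
  have o: "out (x, y)" "\<not> out (x', y)" using W1 inS by auto
  obtain b v s where a: "a = (b, v, s)" by (cases a) auto
  have "nimber opt1 x' = nimber opt2 y" using S_nim[OF inS] o by auto
  then have v: "nimber opt2 y = v" using W1(5)[OF inS] a by (auto simp: correct_def split: if_splits)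
  have "nimber opt1 x \<noteq> nimber opt2 y" using S_nim[OF W1(6)] o by auto
  then show ?case using v a by (simp add: correct_def)
next
  case (W2 x y y' a)
  have inS: "(x, y') \<in> S" using W2 by (auto split: if_splits)
  have o: "out (x, y)" "\<not> out (x, y')" using W2 inS by auto
  obtain b v s where a: "a = (b, v, s)" by (cases a) auto
  have "nimber opt1 x = nimber opt2 y'" using S_nim[OF inS] o by auto
  then have v: "nimber opt1 x = v" using W2(5)[OF inS] a by (auto simp: correct_def split: if_splits)
  have "nimber opt1 x \<noteq> nimber opt2 y" using S_nim[OF W2(6)] o by auto
  then show ?case using v a by (simp add: correct_def)
qed

lemma ans_exists: "z \<in> S \<Longrightarrow> \<exists>a. ans ou ed z a"
proof -
  assume zS: "z \<in> S"
  obtain x y where z: "z = (x, y)" by (cases z)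
  have gxy: "game_pos opt1 (fst z) \<and> game_pos opt2 (snd z)" by (rule S_gp[OF zS])
  have gx: "game_pos opt1 x" using gxy z by simp
  have gy: "game_pos opt2 y" using gxy z by simp
  have "(x, y) \<in> S \<longrightarrow> (\<exists>a. ans ou ed (x, y) a)"
    using gx gy
  proof (induction rule: pair_induct)
    case (step x y)
    show ?case
    proof
      assume inS: "(x, y) \<in> S"
      show "\<exists>a. ans ou ed (x, y) a"
      proof (cases "out (x, y)")
        case True
        have oxy: "ou (x, y)" using True inS by simp
        obtain z' where z': "z' \<in> so (x, y) \<inter> S" "\<not> out z'" using S_win_ex[OF inS True] by blast
        obtain c d where cd: "z' = (c, d)" by (cases z')
        have zS': "(c, d) \<in> S" using z' cd by simp
        have ed': "(c, d) \<in> ed (x, y)" using z' cd inS by simp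
        have nou': "\<not> ou (c, d)" using z' cd by simp
        have "(c, d) \<in> so (x, y)" using z' cd by simp
        then have "(c \<in> opt1 x \<and> d = y) \<or> (c = x \<and> d \<in> opt2 y)" by (simp add: mem_sum_opt)
        then show ?thesis
        proof
          assume h: "c \<in> opt1 x \<and> d = y"
          have "(c, y) \<in> S \<longrightarrow> (\<exists>a. ans ou ed (c, y) a)" using step(3) h by simp
          then obtain a where a: "ans ou ed (c, y) a" using zS' h by auto
          have "ans ou ed (x, y) (False, fst (snd a), False)"
            using ans.W1[of ou x y c ed a] oxy ed' nou' h a by simp
          then show ?thesis by (rule exI)
        next
          assume h: "c = x \<and> d \<in> opt2 y"
          have "(x, d) \<in> S \<longrightarrow> (\<exists>a. ans ou ed (x, d) a)" using step(4) h by simp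
          then obtain a where a: "ans ou ed (x, d) a" using zS' h by auto
          have "ans ou ed (x, y) (True, fst (snd a), False)"
            using ans.W2[of ou x y d ed a] oxy ed' nou' h a by simp
          then show ?thesis by (rule exI)
        qed
      next
        case False
        have nou: "\<not> ou (x, y)" using False by simp
        have opts: "{x'. (x', y) \<in> ed (x, y)} = opt1 x" using first_opts[OF inS False] .
        show ?thesis
        proof (cases "\<exists>x' v s. (x', y) \<in> ed (x, y) \<and> ans ou ed (x', y) (False, v, s)")
          case True
          then obtain x' v s where H: "(x', y) \<in> ed (x, y) \<and> ans ou ed (x', y) (False, v, s)"
            by auto
          have e: "(x', y) \<in> ed (x, y)" using H by (rule conjunct1)
          have a: "ans ou ed (x', y) (False, v, s)" using H by (rule conjunct2)
          have "ans ou ed (x, y) (False, v, True)" using ans.L1[of ou x y x' ed v s] nou e a by simp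
          then show ?thesis by (rule exI)
        next
          case nT: False
          define f where "f x' = fst (snd (SOME a. ans ou ed (x', y) a))" for x'
          have all: "\<forall>x'. (x', y) \<in> ed (x, y) \<longrightarrow> (\<exists>s. ans ou ed (x', y) (True, f x', s))"
          proof (intro allI impI)
            fix x' assume e: "(x', y) \<in> ed (x, y)"
            then have x'1: "x' \<in> opt1 x" using opts by (simp add: set_eq_iff)
            have x'2: "(x', y) \<in> S" using e inS by (simp split: if_splits)
            have "(x', y) \<in> S \<longrightarrow> (\<exists>a. ans ou ed (x', y) a)" by (rule step(3)[OF x'1])
            then have "\<exists>a. ans ou ed (x', y) a" using x'2 by simp
            then have A: "ans ou ed (x', y) (SOME a. ans ou ed (x', y) a)" by (rule someI_ex)
            obtain b v s where bvs: "(SOME a. ans ou ed (x', y) a) = (b, v, s)" by (rule prod_cases3)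
            have Ab: "ans ou ed (x', y) (b, v, s)" using A bvs by simp
            have "b"
            proof (rule ccontr)
              assume "\<not> b"
              then have "ans ou ed (x', y) (False, v, s)" using Ab by simp
              then have "\<exists>x' v s. (x', y) \<in> ed (x, y) \<and> ans ou ed (x', y) (False, v, s)"
                using e by (intro exI conjI)
              then show False using nT by (rule notE[rotated])
            qed
            moreover have "f x' = v" using bvs by (simp add: f_def)
            ultimately have "ans ou ed (x', y) (True, f x', s)" using Ab by simp
            then show "\<exists>s. ans ou ed (x', y) (True, f x', s)" by (rule exI)
          qed
          have "ans ou ed (x, y) (True, mex (f ` {x'. (x', y) \<in> ed (x, y)}), True)"
            by (rule ans.L3[OF nou all])
          then show ?thesis by (rule exI)
        qed
      qed
    qed
  qed
  then show ?thesis using zS z by simp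
qed

end

theorem mainTheorem1:
  shows "\<exists>F :: 'a \<times> 'b \<Rightarrow> ('a \<times> 'b) set \<Rightarrow> ('a \<times> 'b \<Rightarrow> bool)
               \<Rightarrow> ('a \<times> 'b \<Rightarrow> ('a \<times> 'b) set) \<Rightarrow> bool \<times> nat \<times> bool.
    \<forall>(opt1 :: 'a \<Rightarrow> 'a set) (opt2 :: 'b \<Rightarrow> 'b set) P1 P2 S out.
      game_pos opt1 P1 \<and> game_pos opt2 P2 \<and>
      solution_tree (sum_opt opt1 opt2) (P1, P2) S out \<longrightarrow>
      (case F (P1, P2) S (\<lambda>z. z \<in> S \<and> out z)
               (\<lambda>z. if z \<in> S then sum_opt opt1 opt2 z \<inter> S else {}) of
         (first, n, same) \<Rightarrow>
           (if first
            then nimber opt1 P1 = n \<and> (nimber opt2 P2 = n \<longleftrightarrow> same)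
            else nimber opt2 P2 = n \<and> (nimber opt1 P1 = n \<longleftrightarrow> same)))"
  apply (rule exI[where x="\<lambda>r S ou ed. SOME a. ans ou ed r a"])
proof (intro allI impI)
  fix opt1 :: "'a \<Rightarrow> 'a set" and opt2 :: "'b \<Rightarrow> 'b set" and P1 P2 S out
  assume H: "game_pos opt1 P1 \<and> game_pos opt2 P2 \<and> solution_tree (sum_opt opt1 opt2) (P1, P2) S out"
  interpret setting opt1 opt2 P1 P2 S out using H by unfold_locales auto
  let ?r = "(P1, P2)"
  have rS: "?r \<in> S" using st unfolding solution_tree_def by blast
  have "\<exists>a. ans ou ed ?r a" using ans_exists[OF rS] .
  then have A: "ans ou ed ?r (SOME a. ans ou ed ?r a)" by (rule someI_ex)
  have C: "correct opt1 opt2 ?r (SOME a. ans ou ed ?r a)" using ans_correct[OF A rS] .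
  obtain b v s where bvs: "(SOME a. ans ou ed ?r a) = (b, v, s)" by (rule prod_cases3)
  show "case (SOME a. ans ou ed ?r a) of
         (first, n, same) \<Rightarrow>
           (if first
            then nimber opt1 P1 = n \<and> (nimber opt2 P2 = n \<longleftrightarrow> same)
            else nimber opt2 P2 = n \<and> (nimber opt1 P1 = n \<longleftrightarrow> same))"
    using C unfolding bvs correct_def by (cases b) simp_all
qed

end
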